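(* For every even integer $k\geq 4$, $$\nu_2\!\left((-1)^{k/2} + \binom{k}{k/2-1}\right) = \begin{cases} 1 & \text{if } k+2 = 2^{\ell} \text{ for some integer } \ell \geq 3,\\ 0 & \text{otherwise.}\end{cases}$$
   Context: For a prime $p$ and nonzero integer $m$, $\nu_p(m)$ denotes the exponent of the highest power of $p$ dividing $m$; this is extended to $\mathbb{Q}$ by $\nu_p(a/b)=\nu_p(a)-\nu_p(b)$ and $\nu_p(0)=\infty$. *)

theory Defs
  imports "HOL-Computational_Algebra.Computational_Algebra"
begin

end

theory Submission
  imports Defs
begin

lemma pow2_odd_decomp: "(n::nat) > 0 \<Longrightarrow> \<exists>s u. n = 2^s*u \<and> odd u"
proof (induction n rule: less_induct)
  case (less n)
  show ?case
  proof (cases "odd n")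
    case True then show ?thesis by (rule_tac x=0 in exI) auto
  next
    case False
    then obtain m where m: "n = 2*m" by blast
    with less.prems have "m < n" "m > 0" by auto
    with less.IH obtain s u where "m = 2^s*u" "odd u" by blast
    then show ?thesis using m by (rule_tac x="Suc s" in exI, rule_tac x=u in exI) auto
  qed
qed

lemma binom_step: "Suc r * (n choose Suc r) = (n - r) * (n choose r)"
  using binomial_absorption[of r n] binomial_absorb_comp[of n r] by simp

lemma L1: "even ((2*n) choose (2*j)) = even (n choose j)"
proof (induction n arbitrary: j)
  case 0 then show ?case by (cases j) auto
next
  case (Suc n)
  show ?case
  proof (cases j)
    case 0 then show ?thesis by simp
  next
    case (Suc i)
    have e: "(2*Suc n) choose (2*j) = ((2*n) choose (2*i)) + 2*((2*n) choose (2*i+1)) + ((2*n) choose (2*(Suc i)))"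
      using Suc by (simp add: numeral_2_eq_2)
    have "even ((2*Suc n) choose (2*j)) = even (((2*n) choose (2*i)) + ((2*n) choose (2*(Suc i))))"
      unfolding e by simp
    also have "\<dots> = even ((n choose i) + (n choose Suc i))"
      using Suc.IH[of i] Suc.IH[of "Suc i"] by auto
    also have "\<dots> = even (Suc n choose j)" using Suc by simp
    finally show ?thesis .
  qed
qed

lemma L2: "even ((2*n) choose (2*j+1))"
proof -
  have "Suc (2*j) * ((2*n) choose Suc (2*j)) = (2*n) * ((2*n - 1) choose (2*j))"
    by (rule binomial_absorption)
  then have "even (Suc (2*j) * ((2*n) choose Suc (2*j)))" by simp
  then show ?thesis by simp
qed

lemma L3: "even ((2*n+1) choose (2*j)) = even (n choose j)"
proof (cases j)
  case 0 then show ?thesis by simp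
next
  case (Suc i)
  have "(2*n+1) choose (2*j) = ((2*n) choose (2*j)) + ((2*n) choose (2*i+1))"
    using Suc by simp
  then show ?thesis using L1[of n j] L2[of n i] by simp
qed

lemma L4: "even ((2*n+1) choose (2*j+1)) = even (n choose j)"
proof -
  have "(2*n+1) choose (2*j+1) = ((2*n) choose (2*j)) + ((2*n) choose (2*j+1))"
    by simp
  then show ?thesis using L1[of n j] L2[of n j] by simp
qed

lemma central_even: "b > 0 \<Longrightarrow> even ((2*b) choose b)"
proof -
  assume "b > 0"
  then obtain c where c: "b = Suc c" by (cases b) auto
  have "(2*b) choose b = ((2*c+1) choose c) + ((2*c+1) choose (Suc c))"
    using c by simp
  moreover have "(2*c+1) choose (Suc c) = (2*c+1) choose c"
    using binomial_symmetric[of "Suc c" "2*c+1"] by simp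
  ultimately show ?thesis by simp
qed

lemma P: "odd ((2*a+1) choose a) = (\<exists>j. a + 1 = 2^j)"
proof (induction a rule: less_induct)
  case (less a)
  show ?case
  proof (cases "a = 0")
    case True then show ?thesis by (auto intro: exI[of _ 0])
  next
    case False
    show ?thesis
    proof (cases "odd a")
      case True
      then obtain b where b: "a = 2*b+1" by (metis oddE)
      have "(2*a+1) = 2*(2*b+1)+1" using b by simp
      then have "odd ((2*a+1) choose a) = odd ((2*b+1) choose b)"
        using L4[of "2*b+1" b] b by simp
      also have "\<dots> = (\<exists>j. b + 1 = 2^j)" using less.IH[of b] b by simp
      also have "\<dots> = (\<exists>j. a + 1 = 2^j)"
      proof
        assume "\<exists>j. b + 1 = 2^j" then obtain j where "b+1 = 2^j" by blast
        then show "\<exists>j. a + 1 = 2^j" using b by (rule_tac x="Suc j" in exI) simp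
      next
        assume "\<exists>j. a + 1 = 2^j" then obtain j where j: "a+1 = 2^j" by blast
        then have "j \<noteq> 0" using b by (cases j) auto
        then obtain i where "j = Suc i" by (cases j) auto
        then show "\<exists>j. b + 1 = 2^j" using j b by (rule_tac x=i in exI) simp
      qed
      finally show ?thesis .
    next
      case False2: False
      then obtain b where b: "a = 2*b" by blast
      with False have "b > 0" by simp
      have "even ((2*a+1) choose a) = even ((2*b) choose b)"
        using L3[of "2*b" b] b by simp
      then have "even ((2*a+1) choose a)" using central_even[OF \<open>b>0\<close>] by simp
      moreover have "\<not> (\<exists>j. a + 1 = 2^j)"
      proof
        assume "\<exists>j. a + 1 = 2^j" then obtain j where j: "a+1 = 2^j" by blast
        show False
        proof (cases j)
          case 0 then show False using j False by simp
        next
          case (Suc i) then have "Suc (2*b) = 2*2^i" using j b by simp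
          then show False by presburger
        qed
      qed
      ultimately show ?thesis by simp
    qed
  qed
qed

lemma mod4_lemma:
  assumes "l \<ge> 3"
  shows "r < 2^(l-1) \<Longrightarrow> int ((2^l - 1) choose r) mod 4 = (if even r then 1 else 3)"
proof (induction r)
  case 0 then show ?case by simp
next
  case (Suc r)
  define N :: nat where "N = 2^l"
  define c where "c = int ((N - 1) choose r)"
  define c' where "c' = int ((N - 1) choose Suc r)"
  have IH: "c mod 4 = (if even r then 1 else 3)" using Suc unfolding c_def N_def by simp
  obtain s u where su: "Suc r = 2^s*u" "odd u" using pow2_odd_decomp[of "Suc r"] by auto
  have "u \<ge> 1" using su by (cases u) auto
  then have "2^s \<le> Suc r" using su by simp
  also have "\<dots> < 2^(l-1)" using Suc.prems .
  finally have "s < l - 1" by simp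
  then have sl: "s + 2 \<le> l" by simp
  have Nsplit: "N = 2^s * (4 * 2^(l - s - 2))"
  proof -
    have "l = s + 2 + (l - s - 2)" using sl by simp
    then have "(2::nat)^l = 2^s*2^2*2^(l-s-2)" by (metis power_add)
    then show ?thesis unfolding N_def by simp
  qed
  have le: "Suc r \<le> N" using Suc.prems unfolding N_def
    by (meson diff_le_self less_imp_le_nat order.trans one_le_numeral power_increasing)
  have "Suc r * ((N-1) choose Suc r) = (N - Suc r) * ((N-1) choose r)"
    using binom_step[of r "N-1"] by simp
  then have "int (Suc r) * c' = int (N - Suc r) * c" unfolding c_def c'_def by (metis of_nat_mult)
  also have "int (N - Suc r) = int N - int (Suc r)" using le by (simp add: of_nat_diff)
  finally have "int (Suc r) * c' = (int N - int (Suc r)) * c" .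
  then have "2^s * (int u * c') = 2^s * ((4 * 2^(l - s - 2) - int u) * c)"
    using su Nsplit by (simp add: algebra_simps)
  then have eq: "int u * c' = (4 * 2^(l - s - 2) - int u) * c" by simp
  then have "int u * (c' + c) = 4 * (2^(l - s - 2) * c)" by (simp add: algebra_simps)
  then have "(4::int) dvd int u * (c' + c)" by simp
  moreover have "coprime (4::int) (int u)"
  proof -
    have "coprime (2::int) (int u)" using su(2) by (simp add: coprime_commute odd_iff_mod_2_eq_one)
    then have h: "coprime ((2::int)^2) (int u)" by (metis coprime_power_left_iff)
    have e: "(4::int) = 2^2" by simp
    show ?thesis unfolding e by (rule h)
  qed
  ultimately have "(4::int) dvd (c' + c)" using coprime_dvd_mult_right_iff by blast
  then have "c' mod 4 = (- c) mod 4" by (simp add: mod_eq_dvd_iff)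
  then show ?case using IH unfolding c'_def N_def
    by (auto simp: zmod_zminus1_eq_if split: if_splits)
qed

theorem lemma3p1:
  fixes k :: nat
  assumes "even k" and "k \<ge> 4"
  shows "multiplicity (2::int) ((-1) ^ (k div 2) + int (k choose (k div 2 - 1))) =
         (if (\<exists>l::nat. l \<ge> 3 \<and> k + 2 = 2 ^ l) then 1 else 0)"
proof -
  obtain m where k: "k = 2*m" using assms(1) by blast
  have m2: "m \<ge> 2" using assms k by simp
  have kd: "k div 2 = m" using k by simp
  show ?thesis
  proof (cases "even m")
    case True
    then obtain q where q: "m = 2*q" by blast
    with m2 have q1: "q \<ge> 1" by simp
    define j where "j = q - 1"
    have j: "m - 1 = 2*j+1" using q q1 unfolding j_def by simp
    have ev: "even (k choose (m-1))" using L2[of m j] k j by simp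
    have "odd ((-1::int)^m + int (k choose (m-1)))" using True ev by simp
    then have lhs: "multiplicity (2::int) ((-1) ^ (k div 2) + int (k choose (k div 2 - 1))) = 0"
      using kd by (simp add: not_dvd_imp_multiplicity_0)
    have "\<not> (\<exists>l::nat. l \<ge> 3 \<and> k + 2 = 2 ^ l)"
    proof
      assume "\<exists>l::nat. l \<ge> 3 \<and> k + 2 = 2 ^ l"
      then obtain l where l: "l \<ge> 3" "k + 2 = 2^l" by blast
      have "(2::nat)^l = 2^(l-2) * 2^2" using l(1) by (metis le_add_diff_inverse2 power_add le_trans numeral_le_iff semiring_norm(72) semiring_norm(69) nat_le_linear Suc_leD numeral_3_eq_3 numeral_2_eq_2)
      then have "4 dvd k + 2" using l(2) by simp
      then show False using k True by presburger
    qed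
    then show ?thesis using lhs by simp
  next
    case False
    then obtain a where a: "m = 2*a+1" by (metis oddE)
    with m2 have a1: "a \<ge> 1" by simp
    have mm: "m - 1 = 2*a" using a by simp
    have kk: "k = 2*(2*a+1)" using k a by simp
    have par: "even (k choose (m-1)) = even ((2*a+1) choose a)"
      using L1[of "2*a+1" a] kk mm by simp
    have neg: "(-1::int)^m = -1" using False by simp
    show ?thesis
    proof (cases "\<exists>j. a+1 = 2^j")
      case True
      then obtain j where j: "a + 1 = 2^j" by blast
      have j1: "j \<ge> 1" using j a1 by (cases j) auto
      define l where "l = j + 2"
      have kl: "k + 2 = 2^l" unfolding l_def using kk j by (simp add: power_add)
      have l3: "l \<ge> 3" unfolding l_def using j1 by simp
      have aodd: "odd a"
      proof -
        have "even ((2::nat)^j)" using j1 by simp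
        then have "even (a+1)" using j by simp
        then show ?thesis by simp
      qed
      then obtain b where b: "a = 2*b+1" by (metis oddE)
      define C1 where "C1 = int ((2^l - 1) choose (2*a))"
      define C2 where "C2 = int (k choose (2*a))"
      have r: "2*a < 2^(l-1)"
      proof -
        have "(2::nat)^l = 2 * 2^(l-1)" using l3 by (metis One_nat_def Suc_pred less_le_trans numeral_3_eq_3 power_Suc zero_less_Suc)
        then show ?thesis using kl kk by simp
      qed
      have C1m: "C1 mod 4 = 1" using mod4_lemma[OF l3 r] unfolding C1_def by simp
      have N1: "2^l - 1 = k + 1" using kl by simp
      have "(k + 1 - 2*a) * ((k+1) choose (2*a)) = (k+1) * (k choose (2*a))"
        using binomial_absorb_comp[of "k+1" "2*a"] by simp
      moreover have "k + 1 - 2*a = 2*a+3" using kk by simp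
      ultimately have "(2*a+3) * ((k+1) choose (2*a)) = (k+1) * (k choose (2*a))" by simp
      then have "int (2*a+3) * C1 = int (k+1) * C2" unfolding C1_def C2_def N1 by (metis of_nat_mult)
      then have eq: "(4*int b + 5) * C1 = (8 * int b + 7) * C2" using kk b by (simp add: algebra_simps)
      have "C2 + C1 = 4 * (2 * int b * C2 + 2*C2 - int b * C1 - C1)"
        using eq by (simp add: algebra_simps)
      then have "(4::int) dvd C2 + C1" by (metis dvd_triv_left)
      then have "C2 mod 4 = (-C1) mod 4" by (simp add: mod_eq_dvd_iff)
      then have C2m: "C2 mod 4 = 3" using C1m by (simp add: zmod_zminus1_eq_if)
      define X where "X = (-1::int) + C2"
      have Xm: "X mod 4 = 2" unfolding X_def using C2m by presburger
      have "multiplicity (2::int) X = 1"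
      proof (rule multiplicity_eqI)
        have "X mod 2 = (X mod 4) mod 2" by (simp add: mod_mod_cancel)
        then show "(2::int)^1 dvd X" using Xm by (simp add: dvd_eq_mod_eq_0)
        show "\<not> (2::int)^Suc 1 dvd X" using Xm by (simp add: dvd_eq_mod_eq_0)
      qed
      moreover have "(-1) ^ (k div 2) + int (k choose (k div 2 - 1)) = X"
        unfolding X_def C2_def using kd neg mm by simp
      ultimately show ?thesis using kl l3 by auto
    next
      case False2: False
      have "even (k choose (m-1))" using par P[of a] False2 by simp
      then have "odd ((-1::int)^m + int (k choose (m-1)))" using neg by simp
      then have lhs: "multiplicity (2::int) ((-1) ^ (k div 2) + int (k choose (k div 2 - 1))) = 0"
        using kd by (simp add: not_dvd_imp_multiplicity_0)
      have "\<not> (\<exists>l::nat. l \<ge> 3 \<and> k + 2 = 2 ^ l)"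
      proof
        assume "\<exists>l::nat. l \<ge> 3 \<and> k + 2 = 2 ^ l"
        then obtain l where l: "l \<ge> 3" "k + 2 = 2^l" by blast
        have "(2::nat)^l = 2^(l-2) * 2^2" using l(1) by (metis le_add_diff_inverse2 power_add le_trans numeral_le_iff semiring_norm(72) semiring_norm(69) nat_le_linear Suc_leD numeral_3_eq_3 numeral_2_eq_2)
        then have "(2::nat)^l = 2^(l-2) * 4" by simp
        then have "a + 1 = 2^(l-2)" using l(2) kk by simp
        then show False using False2 by blast
      qed
      then show ?thesis using lhs by simp
    qed
  qed
qed

end
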